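(* Let $\Gamma=(C_0,L_{\alpha_1},\dots,L_{\alpha_n},C_n)$ be a gallery in $\Phi$ and $0=i_0\le i_1\le\dots\le i_k=n$ integers. For $l=0,\dots,k-1$ let $\Psi_l$ be a saturated root subsystem of $\Phi$ and $\Delta_l$ a gallery in $\Phi$ lifting $(\Gamma_{[i_l,i_{l+1}]})_{\Psi_l}$, such that for each $l<k-1$ the final chamber of $\Delta_l$ equals the initial chamber of $\Delta_{l+1}$ (this holds in particular for the construction where, given $\Delta_l$ with final chamber $D$, one picks a nonempty $X\subset\Phi^s(D)\cap\Phi^+(C_{i_{l+1}})$, sets $\Psi_{l+1}=\mathbb R X\cap\Phi$ and lets $\Delta_{l+1}$ be the lifting of $(\Gamma_{[i_{l+1},i_{l+2}]})_{\Psi_{l+1}}$ with initial chamber $D$, and symmetrically to the left). Let $p_l:[1,|\Delta_l|]\to[1,i_{l+1}-i_l]$ be the increasing embedding with image $I_{\Psi_l}(\Gamma_{[i_l,i_{l+1}]})$, and define $p:[1,|\Delta_0|+\dots+|\Delta_{k-1}|]\to[1,n]$ by $p(j)=p_l(j-|\Delta_0|-\dots-|\Delta_{l-1}|)+i_l$ for $|\Delta_0|+\dots+|\Delta_{l-1}|<j\le|\Delta_0|+\dots+|\Delta_l|$. Then $(\Delta_0\cup\Delta_1\cup\dots\cup\Delta_{k-1},\Gamma)$ is a $p$-pair with positive sign and positive cosign.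
   Context: $E$ is a finite-dimensional real Euclidean space with inner product $(\cdot,\cdot)$; $\Phi\subset E$ is a finite (reduced) root system (not necessarily spanning, not necessarily crystallographic) with reflections $\omega_\alpha$ through $L_\alpha=\alpha^\perp$. A root subsystem is a nonempty $\Psi\subset\Phi$ stable under $\omega_\alpha$, $\alpha\in\Psi$; it is saturated if $\Psi=\mathbb R\Psi\cap\Phi$. $\mathrm{Ch}_X$ ($X\subset\Phi$) is the set of connected components of $E\setminus\bigcup_{\alpha\in X}L_\alpha$; $C_\Psi$ is the chamber of $\mathrm{Ch}_\Psi$ containing $C\in\mathrm{Ch}_\Phi$. Chambers are connected through $L_\alpha$ if the intersection of their closures with $L_\alpha$ has nonempty interior in $L_\alpha$. A gallery in $X$ is $(C_0,L_{\alpha_1},C_1,\dots,L_{\alpha_n},C_n)$ with $C_j\in\mathrm{Ch}_X$, $\alpha_j\in X$, $C_{j-1},C_j$ connected through $L_{\alpha_j}$; length $n$, initial chamber $C_0$, final chamber $C_n$. $\Gamma_{[i,j]}=(C_i,L_{\alpha_{i+1}},\dots,L_{\alpha_j},C_j)$. If the final chamber of $\Gamma$ equals the initial chamber of $\Delta=(C_n,L_{\beta_1},\dots,L_{\beta_m},D_m)$, then $\Gamma\cup\Delta=(C_0,L_{\alpha_1},\dots,L_{\alpha_n},C_n,L_{\beta_1},\dots,L_{\beta_m},D_m)$. $I_\Psi(\Gamma)=\{i:\alpha_i\in\Psi\}=\{i_1<\dots<i_m\}$ and $\Gamma_\Psi=((C_0)_\Psi,L_{\alpha_{i_1}},(C_{i_1})_\Psi,\dots,L_{\alpha_{i_m}},(C_{i_m})_\Psi)$.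 $\Phi^+(C)=\{\alpha\in\Phi:(e,\alpha)>0\ \forall e\in C\}$, $\Phi^s(C)$ the simple system in $\Phi^+(C)$; similarly for $\Psi$. $C$ lifts $D\in\mathrm{Ch}_\Psi$ if $\Psi^s(D)\subset\Phi^s(C)$; a gallery in $\Phi$ lifts a gallery in $\Psi$ if the wall sequences coincide and each $j$th chamber of the first lifts the $j$th chamber of the second. For galleries $\Gamma=(C_0,L_{\alpha_1},\dots,C_n)$, $\Delta=(D_0,L_{\beta_1},\dots,D_m)$ in $\Phi$ and increasing $p:[1,m]\to[1,n]$, $(\Delta,\Gamma)$ is a $p$-pair if $L_{\alpha_{p(i)}}=L_{\beta_i}$ for all $i$; its sign has $\epsilon_i=1$ iff $L_{\beta_i}$ does not separate $D_i$ and $C_{p(i)}$, its cosign has $\mu_i=1$ iff $L_{\beta_i}$ does not separate $D_{i-1}$ and $C_{p(i)-1}$ (otherwise $-1$); positive means all entries are $1$. *)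

theory Defs
  imports "HOL-Analysis.Analysis"
begin

definition hyp :: "'a::euclidean_space \<Rightarrow> 'a set" where
  "hyp \<alpha> = {x. inner x \<alpha> = 0}"

definition refl :: "'a::euclidean_space \<Rightarrow> 'a \<Rightarrow> 'a" where
  "refl \<alpha> x = x - (2 * inner x \<alpha> / inner \<alpha> \<alpha>) *\<^sub>R \<alpha>"

text \<open>Finite reduced root system (not necessarily spanning, not necessarily crystallographic).\<close>
definition root_system :: "'a::euclidean_space set \<Rightarrow> bool" where
  "root_system \<Phi> \<longleftrightarrow> finite \<Phi> \<and> 0 \<notin> \<Phi>
     \<and> (\<forall>\<alpha>\<in>\<Phi>. \<forall>\<beta>\<in>\<Phi>. refl \<alpha> \<beta> \<in> \<Phi>)
     \<and> (\<forall>\<alpha>\<in>\<Phi>. \<forall>c::real. c *\<^sub>R \<alpha> \<in> \<Phi> \<longrightarrow> c = 1 \<or> c = -1)"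

definition root_subsystem :: "'a::euclidean_space set \<Rightarrow> 'a set \<Rightarrow> bool" where
  "root_subsystem \<Phi> \<Psi> \<longleftrightarrow> \<Psi> \<noteq> {} \<and> \<Psi> \<subseteq> \<Phi> \<and> (\<forall>\<alpha>\<in>\<Psi>. \<forall>\<beta>\<in>\<Psi>. refl \<alpha> \<beta> \<in> \<Psi>)"

definition saturated :: "'a::euclidean_space set \<Rightarrow> 'a set \<Rightarrow> bool" where
  "saturated \<Phi> \<Psi> \<longleftrightarrow> \<Psi> = span \<Psi> \<inter> \<Phi>"

definition Ch :: "'a::euclidean_space set \<Rightarrow> 'a set set" where
  "Ch X = components (UNIV - (\<Union>\<alpha>\<in>X. hyp \<alpha>))"

definition restr :: "'a::euclidean_space set \<Rightarrow> 'a set \<Rightarrow> 'a set" where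
  "restr \<Psi> C = (THE D. D \<in> Ch \<Psi> \<and> C \<subseteq> D)"

definition connected_through :: "'a::euclidean_space set \<Rightarrow> 'a set \<Rightarrow> 'a set \<Rightarrow> bool" where
  "connected_through C D L \<longleftrightarrow>
     (\<exists>U. openin (top_of_set L) U \<and> U \<noteq> {} \<and> U \<subseteq> closure C \<inter> closure D \<inter> L)"

definition pos :: "'a::euclidean_space set \<Rightarrow> 'a set \<Rightarrow> 'a set" where
  "pos X C = {\<alpha>\<in>X. \<forall>e\<in>C. inner e \<alpha> > 0}"

definition simple_system :: "'a::euclidean_space set \<Rightarrow> 'a set \<Rightarrow> bool" where
  "simple_system X S \<longleftrightarrow> finite S \<and> S \<subseteq> X \<and> independent S \<and>
     (\<forall>\<alpha>\<in>X. \<exists>c. \<alpha> = (\<Sum>\<delta>\<in>S. c \<delta> *\<^sub>R \<delta>) \<and> ((\<forall>\<delta>\<in>S. c \<delta> \<ge> 0) \<or> (\<forall>\<delta>\<in>S. c \<delta> \<le> 0)))"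

definition simple :: "'a::euclidean_space set \<Rightarrow> 'a set \<Rightarrow> 'a set" where
  "simple X C = (THE S. simple_system X S \<and> S \<subseteq> pos X C)"

definition lifts_ch :: "'a::euclidean_space set \<Rightarrow> 'a set \<Rightarrow> 'a set \<Rightarrow> 'a set \<Rightarrow> bool" where
  "lifts_ch \<Phi> \<Psi> C D \<longleftrightarrow> simple \<Psi> D \<subseteq> simple \<Phi> C"

text \<open>A gallery (C_0, L_1, C_1, ..., L_n, C_n) is represented by the list of chambers
  [C_0,...,C_n] and the list of walls (hyperplanes) [L_1,...,L_n].\<close>
type_synonym 'a gallery = "'a set list \<times> 'a set list"

definition glen :: "'a gallery \<Rightarrow> nat" where
  "glen \<Gamma> = length (snd \<Gamma>)"

definition chamber :: "'a gallery \<Rightarrow> nat \<Rightarrow> 'a set" where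
  "chamber \<Gamma> j = fst \<Gamma> ! j"

text \<open>The j-th wall, j = 1..n.\<close>
definition wall :: "'a gallery \<Rightarrow> nat \<Rightarrow> 'a set" where
  "wall \<Gamma> j = snd \<Gamma> ! (j - 1)"

definition init_ch :: "'a gallery \<Rightarrow> 'a set" where
  "init_ch \<Gamma> = chamber \<Gamma> 0"

definition final_ch :: "'a gallery \<Rightarrow> 'a set" where
  "final_ch \<Gamma> = chamber \<Gamma> (glen \<Gamma>)"

definition is_gallery :: "'a::euclidean_space set \<Rightarrow> 'a gallery \<Rightarrow> bool" where
  "is_gallery X \<Gamma> \<longleftrightarrow> length (fst \<Gamma>) = Suc (glen \<Gamma>)
     \<and> (\<forall>j\<le>glen \<Gamma>. chamber \<Gamma> j \<in> Ch X)
     \<and> (\<forall>j\<in>{1..glen \<Gamma>}. (\<exists>\<alpha>\<in>X. wall \<Gamma> j = hyp \<alpha>)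
            \<and> connected_through (chamber \<Gamma> (j - 1)) (chamber \<Gamma> j) (wall \<Gamma> j))"

definition subgallery :: "'a gallery \<Rightarrow> nat \<Rightarrow> nat \<Rightarrow> 'a gallery" where
  "subgallery \<Gamma> i j = (take (Suc (j - i)) (drop i (fst \<Gamma>)), take (j - i) (drop i (snd \<Gamma>)))"

text \<open>Concatenation \<Gamma> \<union> \<Delta> (meaningful when the final chamber of
  \<Gamma> is the initial chamber of \<Delta>).\<close>
definition gappend :: "'a gallery \<Rightarrow> 'a gallery \<Rightarrow> 'a gallery" where
  "gappend \<Gamma> \<Delta> = (fst \<Gamma> @ tl (fst \<Delta>), snd \<Gamma> @ snd \<Delta>)"

fun gconcat :: "'a gallery list \<Rightarrow> 'a gallery" where
  "gconcat [] = ([], [])"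
| "gconcat [\<Gamma>] = \<Gamma>"
| "gconcat (\<Gamma> # \<Delta> # \<Delta>s) = gappend \<Gamma> (gconcat (\<Delta> # \<Delta>s))"

definition Iset :: "'a::euclidean_space set \<Rightarrow> 'a gallery \<Rightarrow> nat set" where
  "Iset \<Psi> \<Gamma> = {i\<in>{1..glen \<Gamma>}. \<exists>\<alpha>\<in>\<Psi>. wall \<Gamma> i = hyp \<alpha>}"

definition grestr :: "'a::euclidean_space set \<Rightarrow> 'a gallery \<Rightarrow> 'a gallery" where
  "grestr \<Psi> \<Gamma> = (let idx = sorted_list_of_set (Iset \<Psi> \<Gamma>) in
     (map (\<lambda>j. restr \<Psi> (chamber \<Gamma> j)) (0 # idx), map (wall \<Gamma>) idx))"

definition lifts :: "'a::euclidean_space set \<Rightarrow> 'a set \<Rightarrow> 'a gallery \<Rightarrow> 'a gallery \<Rightarrow> bool" where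
  "lifts \<Phi> \<Psi> \<Delta> \<Gamma>' \<longleftrightarrow> snd \<Delta> = snd \<Gamma>' \<and> length (fst \<Delta>) = length (fst \<Gamma>')
     \<and> (\<forall>j<length (fst \<Delta>). lifts_ch \<Phi> \<Psi> (chamber \<Delta> j) (chamber \<Gamma>' j))"

definition separates :: "'a::euclidean_space set \<Rightarrow> 'a set \<Rightarrow> 'a set \<Rightarrow> bool" where
  "separates H A B \<longleftrightarrow> (\<exists>u. u \<noteq> 0 \<and> H = hyp u \<and>
      (\<forall>x\<in>A. inner x u > 0) \<and> (\<forall>y\<in>B. inner y u < 0))"

definition ppair :: "'a gallery \<Rightarrow> 'a gallery \<Rightarrow> (nat \<Rightarrow> nat) \<Rightarrow> bool" where
  "ppair \<Delta> \<Gamma> p \<longleftrightarrow> strict_mono_on {1..glen \<Delta>} p \<and> p ` {1..glen \<Delta>} \<subseteq> {1..glen \<Gamma>}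
     \<and> (\<forall>i\<in>{1..glen \<Delta>}. wall \<Gamma> (p i) = wall \<Delta> i)"

definition positive_sign :: "'a::euclidean_space gallery \<Rightarrow> 'a gallery \<Rightarrow> (nat \<Rightarrow> nat) \<Rightarrow> bool" where
  "positive_sign \<Delta> \<Gamma> p \<longleftrightarrow>
     (\<forall>i\<in>{1..glen \<Delta>}. \<not> separates (wall \<Delta> i) (chamber \<Delta> i) (chamber \<Gamma> (p i)))"

definition positive_cosign :: "'a::euclidean_space gallery \<Rightarrow> 'a gallery \<Rightarrow> (nat \<Rightarrow> nat) \<Rightarrow> bool" where
  "positive_cosign \<Delta> \<Gamma> p \<longleftrightarrow>
     (\<forall>i\<in>{1..glen \<Delta>}. \<not> separates (wall \<Delta> i) (chamber \<Delta> (i - 1)) (chamber \<Gamma> (p i - 1)))"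

end

theory Submission
  imports Defs
begin


lemma hyp_closed: "closed (hyp (a::'a::euclidean_space))"
proof -
  have "hyp a = {x. a \<bullet> x = 0}" by (auto simp: hyp_def inner_commute)
  thus ?thesis using closed_hyperplane by metis
qed

lemma hyp_subspace: "subspace (hyp (a::'a::euclidean_space))"
  unfolding hyp_def subspace_def by (auto simp: inner_add_left)

definition OX :: "'a::euclidean_space set \<Rightarrow> 'a set" where
  "OX X = UNIV - (\<Union>\<alpha>\<in>X. hyp \<alpha>)"

lemma Ch_OX: "Ch X = components (OX X)" by (simp add: Ch_def OX_def)

lemma OX_open: "finite X \<Longrightarrow> open (OX X)"
  unfolding OX_def using hyp_closed by (intro open_Diff closed_UN) auto

lemma ch_basic:
  assumes "C \<in> Ch X"
  shows "C \<noteq> {}" "connected C" "C \<subseteq> OX X"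
  using assms by (auto simp: Ch_OX in_components_nonempty in_components_connected in_components_subset)

lemma ch_open: "finite X \<Longrightarrow> C \<in> Ch X \<Longrightarrow> open C"
  using OX_open open_components Ch_OX by metis

lemma ch_avoid: "C \<in> Ch X \<Longrightarrow> \<alpha> \<in> X \<Longrightarrow> e \<in> C \<Longrightarrow> inner e \<alpha> \<noteq> 0"
  using ch_basic(3)[of C X] by (auto simp: OX_def hyp_def)

lemma ch_sign:
  assumes "C \<in> Ch X" "\<alpha> \<in> X"
  shows "(\<forall>e\<in>C. inner e \<alpha> > 0) \<or> (\<forall>e\<in>C. inner e \<alpha> < 0)"
proof (rule ccontr)
  assume "\<not> ?thesis"
  then obtain x y where xy: "x \<in> C" "y \<in> C" "inner x \<alpha> \<le> 0" "0 \<le> inner y \<alpha>"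
    by (auto simp: not_less)
  then obtain z where "z \<in> C" "\<alpha> \<bullet> z = 0"
    using connected_ivt_hyperplane[OF ch_basic(2)[OF assms(1)] xy(1,2), of \<alpha> 0]
    by (auto simp: inner_commute)
  thus False using ch_avoid[OF assms] by (metis inner_commute)
qed

lemma hyp_sub_parallel:
  fixes \<alpha> \<beta> :: "'a::euclidean_space"
  assumes "\<alpha> \<noteq> 0" "hyp \<alpha> \<subseteq> hyp \<beta>"
  shows "\<beta> = (inner \<beta> \<alpha> / inner \<alpha> \<alpha>) *\<^sub>R \<alpha>"
proof -
  define c where "c = inner \<beta> \<alpha> / inner \<alpha> \<alpha>"
  define w where "w = \<beta> - c *\<^sub>R \<alpha>"
  have aa: "inner \<alpha> \<alpha> \<noteq> 0" using assms by simp
  have wa: "inner w \<alpha> = 0" using aa by (simp add: w_def c_def inner_diff_left)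
  hence "w \<in> hyp \<beta>" using assms by (auto simp: hyp_def)
  hence wb: "inner w \<beta> = 0" by (simp add: hyp_def)
  have "inner w w = inner w \<beta> - c * inner w \<alpha>" by (simp add: w_def inner_diff_right)
  hence "w = 0" using wa wb by simp
  thus ?thesis by (simp add: w_def c_def)
qed

lemma hyp_scale: "c \<noteq> 0 \<Longrightarrow> hyp (c *\<^sub>R \<alpha>) = hyp \<alpha>"
  by (auto simp: hyp_def)

lemma hyp_sub_eq:
  fixes \<alpha> \<beta> :: "'a::euclidean_space"
  assumes "\<alpha> \<noteq> 0" "\<beta> \<noteq> 0" "hyp \<alpha> \<subseteq> hyp \<beta>"
  shows "hyp \<alpha> = hyp \<beta>"
proof -
  have e: "\<beta> = (inner \<beta> \<alpha> / inner \<alpha> \<alpha>) *\<^sub>R \<alpha>" by (rule hyp_sub_parallel[OF assms(1,3)])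
  hence "inner \<beta> \<alpha> / inner \<alpha> \<alpha> \<noteq> 0" using assms(2) by (metis scale_zero_left)
  thus ?thesis by (subst e) (simp add: hyp_scale)
qed

lemma avoid_point:
  fixes \<alpha> :: "'a::euclidean_space"
  assumes "finite B" "\<alpha> \<noteq> 0" "\<forall>\<beta>\<in>B. \<beta> \<noteq> 0 \<and> hyp \<alpha> \<noteq> hyp \<beta>"
  shows "openin (top_of_set (hyp \<alpha>)) U \<Longrightarrow> U \<noteq> {} \<Longrightarrow> \<exists>x\<in>U. \<forall>\<beta>\<in>B. x \<notin> hyp \<beta>"
  using assms(1,3)
proof (induction B arbitrary: U rule: finite_induct)
  case empty thus ?case by auto
next
  case (insert \<beta> B)
  have ah: "affine hull (hyp \<alpha>) = hyp \<alpha>"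
    by (simp add: affine_hull_eq hyp_subspace subspace_imp_affine)
  have ahb: "affine hull (hyp \<beta>) = hyp \<beta>"
    by (simp add: affine_hull_eq hyp_subspace subspace_imp_affine)
  have op: "openin (top_of_set (hyp \<alpha>)) (U - hyp \<beta>)"
  proof -
    have "openin (top_of_set (hyp \<alpha>)) (U - (hyp \<alpha> \<inter> hyp \<beta>))"
      by (rule openin_diff[OF insert.prems(1)]) (simp add: closedin_closed_Int hyp_closed)
    moreover have "U \<subseteq> hyp \<alpha>" using openin_subset[OF insert.prems(1)] by simp
    moreover have "U - (hyp \<alpha> \<inter> hyp \<beta>) = U - hyp \<beta>" using calculation(2) by blast
    ultimately show ?thesis by simp
  qed
  have "U - hyp \<beta> \<noteq> {}"
  proof
    assume "U - hyp \<beta> = {}"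
    hence "U \<subseteq> hyp \<beta>" by auto
    hence "affine hull U \<subseteq> hyp \<beta>" using ahb hull_mono by metis
    moreover have "affine hull U = hyp \<alpha>"
      using affine_hull_openin[of "hyp \<alpha>" U] insert.prems(1,2) ah by simp
    ultimately have "hyp \<alpha> = hyp \<beta>" using hyp_sub_eq[of \<alpha> \<beta>] assms(2) insert.prems(3) by simp
    thus False using insert.prems(3) by auto
  qed
  then obtain x where "x \<in> U - hyp \<beta>" "\<forall>\<gamma>\<in>B. x \<notin> hyp \<gamma>"
    using insert.IH[OF op] insert.prems(3) by blast
  thus ?case by auto
qed



lemma OX_anti: "\<Psi> \<subseteq> \<Phi> \<Longrightarrow> OX \<Phi> \<subseteq> OX \<Psi>"
  by (auto simp: OX_def)

lemma restr_eq:
  assumes "\<Psi> \<subseteq> \<Phi>" "C \<in> Ch \<Phi>" "D \<in> Ch \<Psi>" "C \<subseteq> D"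
  shows "restr \<Psi> C = D"
  unfolding restr_def
proof (rule the_equality)
  show "D \<in> Ch \<Psi> \<and> C \<subseteq> D" using assms by simp
  fix D' assume "D' \<in> Ch \<Psi> \<and> C \<subseteq> D'"
  moreover have "C \<noteq> {}" using ch_basic(1)[OF assms(2)] .
  ultimately have "D' \<inter> D \<noteq> {}" using assms(4) by blast
  thus "D' = D" using components_nonoverlap \<open>D' \<in> Ch \<Psi> \<and> C \<subseteq> D'\<close> assms(3) Ch_OX by metis
qed

lemma restr_ex:
  assumes "\<Psi> \<subseteq> \<Phi>" "C \<in> Ch \<Phi>"
  shows "restr \<Psi> C \<in> Ch \<Psi> \<and> C \<subseteq> restr \<Psi> C"
proof -
  obtain x where x: "x \<in> C" using ch_basic(1)[OF assms(2)] by blast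
  have sub: "C \<subseteq> OX \<Psi>" using ch_basic(3)[OF assms(2)] OX_anti[OF assms(1)] by blast
  define D where "D = connected_component_set (OX \<Psi>) x"
  have D: "D \<in> Ch \<Psi>" unfolding D_def Ch_OX components_iff using x sub by blast
  have "C \<subseteq> D" unfolding D_def
    by (rule connected_component_maximal[OF x ch_basic(2)[OF assms(2)] sub])
  thus ?thesis using restr_eq[OF assms D] D by simp
qed

lemma crossing:
  assumes "finite \<Phi>" "0 \<notin> \<Phi>" "\<Psi> \<subseteq> \<Phi>" "C \<in> Ch \<Phi>" "D \<in> Ch \<Phi>" "\<alpha> \<in> \<Phi>"
    "connected_through C D (hyp \<alpha>)" "\<forall>\<beta>\<in>\<Psi>. hyp \<alpha> \<noteq> hyp \<beta>"
  shows "restr \<Psi> C = restr \<Psi> D"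
proof -
  obtain U where U: "openin (top_of_set (hyp \<alpha>)) U" "U \<noteq> {}" "U \<subseteq> closure C \<inter> closure D \<inter> hyp \<alpha>"
    using assms(7) unfolding connected_through_def by blast
  have fin: "finite \<Psi>" using assms(1,3) finite_subset by blast
  obtain x where x: "x \<in> U" "\<forall>\<beta>\<in>\<Psi>. x \<notin> hyp \<beta>"
    using avoid_point[OF fin _ _ U(1,2)] assms(2,3,6,8) by blast
  have xo: "x \<in> OX \<Psi>" using x by (auto simp: OX_def)
  define E where "E = connected_component_set (OX \<Psi>) x"
  have E: "E \<in> Ch \<Psi>" unfolding E_def Ch_OX components_iff using xo by blast
  have Eo: "open E" using ch_open[OF fin E] .
  have xE: "x \<in> E" unfolding E_def using xo by simp
  have sub: "\<And>C. C \<in> Ch \<Phi> \<Longrightarrow> x \<in> closure C \<Longrightarrow> C \<subseteq> E"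
  proof -
    fix C assume C: "C \<in> Ch \<Phi>" "x \<in> closure C"
    have "E \<inter> closure C \<noteq> {}" using xE C(2) by blast
    hence "E \<inter> C \<noteq> {}" using open_Int_closure_eq_empty[OF Eo] by blast
    moreover have "C \<subseteq> OX \<Psi>" using ch_basic(3)[OF C(1)] OX_anti[OF assms(3)] by blast
    ultimately show "C \<subseteq> E"
      using components_maximal[of E "OX \<Psi>" C] E ch_basic(2)[OF C(1)] Ch_OX by blast
  qed
  have "restr \<Psi> C = E" using restr_eq[OF assms(3,4) E sub[OF assms(4)]] x U(3) by blast
  moreover have "restr \<Psi> D = E" using restr_eq[OF assms(3,5) E sub[OF assms(5)]] x U(3) by blast
  ultimately show ?thesis by simp
qed



definition pcone :: "'a::euclidean_space set \<Rightarrow> 'a \<Rightarrow> bool" where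
  "pcone S \<alpha> \<longleftrightarrow> (\<exists>c. \<alpha> = (\<Sum>\<delta>\<in>S. c \<delta> *\<^sub>R \<delta>) \<and> (\<forall>\<delta>\<in>S. c \<delta> \<ge> 0))"

lemma refl_self: "\<alpha> \<noteq> 0 \<Longrightarrow> refl \<alpha> \<alpha> = - \<alpha>"
  by (simp add: refl_def algebra_simps scaleR_2)

lemma rs_neg: "root_system X \<Longrightarrow> \<alpha> \<in> X \<Longrightarrow> - \<alpha> \<in> X"
  unfolding root_system_def using refl_self by metis

lemma gen_elim:
  fixes e :: "'a::euclidean_space"
  assumes "finite \<Delta>" "\<forall>\<delta>\<in>\<Delta>. inner e \<delta> > 0" "(\<Sum>\<delta>\<in>\<Delta>. g \<delta> *\<^sub>R \<delta>) = 0" "\<beta> \<in> \<Delta>"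
    "\<forall>\<delta>\<in>\<Delta>-{\<beta>}. g \<delta> \<ge> 0" "\<gamma> \<in> \<Delta>-{\<beta>}" "g \<gamma> > 0"
  shows "pcone (\<Delta>-{\<beta>}) \<beta>"
proof -
  have split: "g \<beta> *\<^sub>R \<beta> + (\<Sum>\<delta>\<in>\<Delta>-{\<beta>}. g \<delta> *\<^sub>R \<delta>) = 0"
    using assms(3) sum.remove[OF assms(1,4), of "\<lambda>\<delta>. g \<delta> *\<^sub>R \<delta>"] by simp
  show ?thesis
  proof (cases "g \<beta> \<ge> 0")
    case True
    have "0 < (\<Sum>\<delta>\<in>\<Delta>. g \<delta> * inner e \<delta>)"
    proof (rule sum_pos2[of \<Delta> \<gamma>])
      show "finite \<Delta>" "\<gamma> \<in> \<Delta>" using assms by auto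
      show "0 < g \<gamma> * inner e \<gamma>" using assms by auto
      fix i assume "i \<in> \<Delta>"
      hence "0 \<le> g i" "0 \<le> inner e i" using assms True by (cases "i = \<beta>", auto simp: less_imp_le)
      thus "0 \<le> g i * inner e i" by simp
    qed
    also have "\<dots> = inner e (\<Sum>\<delta>\<in>\<Delta>. g \<delta> *\<^sub>R \<delta>)" by (simp add: inner_sum_right)
    finally show ?thesis using assms(3) by simp
  next
    case False
    define c where "c \<delta> = g \<delta> / (- g \<beta>)" for \<delta>
    have "(\<Sum>\<delta>\<in>\<Delta>-{\<beta>}. c \<delta> *\<^sub>R \<delta>) = (1 / (- g \<beta>)) *\<^sub>R (\<Sum>\<delta>\<in>\<Delta>-{\<beta>}. g \<delta> *\<^sub>R \<delta>)"
      by (simp add: c_def scaleR_sum_right)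
    also have "\<dots> = (1 / (- g \<beta>)) *\<^sub>R (- (g \<beta> *\<^sub>R \<beta>))" using split by (metis add.commute add_eq_0_iff)
    also have "\<dots> = \<beta>" using False by simp
    moreover have "\<forall>\<delta>\<in>\<Delta>-{\<beta>}. c \<delta> \<ge> 0"
    proof
      fix \<delta> assume "\<delta> \<in> \<Delta>-{\<beta>}"
      hence "0 \<le> g \<delta>" "0 < - g \<beta>" using assms(5) False by auto
      thus "c \<delta> \<ge> 0" unfolding c_def by (rule divide_nonneg_pos)
    qed
    ultimately show ?thesis unfolding pcone_def by metis
  qed
qed

lemma pcone_subst:
  assumes "finite \<Delta>" "\<beta> \<in> \<Delta>" "pcone \<Delta> \<alpha>" "pcone (\<Delta>-{\<beta>}) \<beta>"
  shows "pcone (\<Delta>-{\<beta>}) \<alpha>"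
proof -
  obtain c where c: "\<alpha> = (\<Sum>\<delta>\<in>\<Delta>. c \<delta> *\<^sub>R \<delta>)" "\<forall>\<delta>\<in>\<Delta>. c \<delta> \<ge> 0" using assms(3) pcone_def by blast
  obtain d where d: "\<beta> = (\<Sum>\<delta>\<in>\<Delta>-{\<beta>}. d \<delta> *\<^sub>R \<delta>)" "\<forall>\<delta>\<in>\<Delta>-{\<beta>}. d \<delta> \<ge> 0"
    using assms(4) pcone_def by blast
  have "\<alpha> = c \<beta> *\<^sub>R \<beta> + (\<Sum>\<delta>\<in>\<Delta>-{\<beta>}. c \<delta> *\<^sub>R \<delta>)"
    using c(1) sum.remove[OF assms(1,2), of "\<lambda>\<delta>. c \<delta> *\<^sub>R \<delta>"] by simp
  also have "\<dots> = (\<Sum>\<delta>\<in>\<Delta>-{\<beta>}. (c \<beta> * d \<delta> + c \<delta>) *\<^sub>R \<delta>)"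
    by (subst d(1)) (simp add: scaleR_sum_right scaleR_add_left sum.distrib)
  finally show ?thesis unfolding pcone_def using c(2) d(2) assms(2)
    by (intro exI[of _ "\<lambda>\<delta>. c \<beta> * d \<delta> + c \<delta>"]) auto
qed

lemma obtuse_indep:
  fixes e :: "'a::euclidean_space"
  assumes "finite \<Delta>" "\<forall>\<delta>\<in>\<Delta>. inner e \<delta> > 0" "\<forall>a\<in>\<Delta>. \<forall>b\<in>\<Delta>. a \<noteq> b \<longrightarrow> inner a b \<le> 0"
  shows "independent \<Delta>"
proof
  assume "dependent \<Delta>"
  then obtain u where u: "\<exists>v\<in>\<Delta>. u v \<noteq> 0" "(\<Sum>v\<in>\<Delta>. u v *\<^sub>R v) = 0"
    using dependent_finite[OF assms(1)] by blast
  define A where "A = {v\<in>\<Delta>. u v > 0}"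
  define B where "B = {v\<in>\<Delta>. u v < 0}"
  define Z where "Z = {v\<in>\<Delta>. u v = 0}"
  have fA: "finite A" "finite B" "finite Z" using assms(1) by (auto simp: A_def B_def Z_def)
  have "(\<Sum>v\<in>\<Delta>. u v *\<^sub>R v) = (\<Sum>v\<in>A\<union>B. u v *\<^sub>R v)"
    by (rule sum.mono_neutral_right) (auto simp: A_def B_def assms(1))
  also have "\<dots> = (\<Sum>v\<in>A. u v *\<^sub>R v) + (\<Sum>v\<in>B. u v *\<^sub>R v)"
    by (rule sum.union_disjoint) (use fA in \<open>auto simp: A_def B_def\<close>)
  finally have eq: "(\<Sum>v\<in>A. u v *\<^sub>R v) = (\<Sum>v\<in>B. (- u v) *\<^sub>R v)"
    using u(2) by (simp add: sum_negf eq_neg_iff_add_eq_0)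
  define \<sigma> where "\<sigma> = (\<Sum>v\<in>A. u v *\<^sub>R v)"
  have "inner \<sigma> \<sigma> = inner (\<Sum>v\<in>A. u v *\<^sub>R v) (\<Sum>v\<in>B. (- u v) *\<^sub>R v)" using eq \<sigma>_def by simp
  also have "\<dots> = (\<Sum>a\<in>A. \<Sum>b\<in>B. u a * (- u b) * inner a b)"
    by (simp add: inner_sum_left inner_sum_right sum_distrib_left algebra_simps sum.swap[of _ B A] sum_negf)
  also have "\<dots> \<le> 0"
  proof (intro sum_nonpos)
    fix a b assume ab: "a \<in> A" "b \<in> B"
    hence "a \<noteq> b" "a \<in> \<Delta>" "b \<in> \<Delta>" by (auto simp: A_def B_def)
    hence "inner a b \<le> 0" using assms(3) by blast
    moreover have "u a * (- u b) \<ge> 0" using ab by (auto simp: A_def B_def mult_pos_neg less_imp_le)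
    ultimately show "u a * (- u b) * inner a b \<le> 0" by (rule mult_nonneg_nonpos[rotated])
  qed
  finally have s0: "\<sigma> = 0" using inner_ge_zero[of \<sigma>] by (metis antisym inner_eq_zero_iff)
  have "A = {}"
  proof (rule ccontr)
    assume "A \<noteq> {}"
    then obtain a where "a \<in> A" by blast
    hence "0 < (\<Sum>v\<in>A. u v * inner e v)"
      using fA assms(2) by (intro sum_pos2[of _ a]) (auto simp: A_def)
    also have "\<dots> = inner e \<sigma>" by (simp add: \<sigma>_def inner_sum_right)
    finally show False using s0 by simp
  qed
  moreover have "B = {}"
  proof (rule ccontr)
    assume "B \<noteq> {}"
    then obtain a where "a \<in> B" by blast
    hence "0 < (\<Sum>v\<in>B. (- u v) * inner e v)"
      using fA assms(2) by (intro sum_pos2[of _ a]) (auto simp: B_def mult_neg_pos less_imp_le mult_nonpos_nonneg)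
    also have "\<dots> = inner e \<sigma>" using eq by (simp add: \<sigma>_def inner_sum_right)
    finally show False using s0 by simp
  qed
  ultimately show False using u(1) by (auto simp: A_def B_def neq_iff)
qed



lemma sum_ind:
  fixes x :: real
  assumes "finite \<Delta>" "b \<in> \<Delta>"
  shows "(\<Sum>\<delta>\<in>\<Delta>. (if \<delta> = b then x else 0) *\<^sub>R (\<delta>::'a::euclidean_space)) = x *\<^sub>R b"
proof -
  have "(\<Sum>\<delta>\<in>\<Delta>. (if \<delta> = b then x else 0) *\<^sub>R \<delta>) = (\<Sum>\<delta>\<in>\<Delta>. if \<delta> = b then x *\<^sub>R b else 0)"
    by (rule sum.cong) auto
  thus ?thesis using sum.delta[OF assms(1), of b "\<lambda>_. x *\<^sub>R b"] assms(2) by simp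
qed

lemma pos_mem: "\<alpha> \<in> pos X C \<Longrightarrow> e \<in> C \<Longrightarrow> inner e \<alpha> > 0"
  by (auto simp: pos_def)

lemma simple_exists:
  fixes X :: "'a::euclidean_space set"
  assumes rs: "root_system X" and C: "C \<in> Ch X"
  shows "\<exists>S. simple_system X S \<and> S \<subseteq> pos X C"
proof -
  define P where "P = pos X C"
  have finX: "finite X" using rs root_system_def by blast
  have finP: "finite P" using finX by (simp add: P_def pos_def)
  have PX: "P \<subseteq> X" by (auto simp: P_def pos_def)
  obtain e where e: "e \<in> C" using ch_basic(1)[OF C] by blast
  have eP: "\<forall>\<delta>\<in>P. inner e \<delta> > 0" using e by (auto simp: P_def pos_def inner_commute)
  define M where "M \<Delta> \<longleftrightarrow> \<Delta> \<subseteq> P \<and> (\<forall>\<alpha>\<in>P. pcone \<Delta> \<alpha>)" for \<Delta>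
  have "M P" unfolding M_def pcone_def
  proof (intro conjI ballI)
    fix \<alpha> assume "\<alpha> \<in> P"
    thus "\<exists>c. \<alpha> = (\<Sum>\<delta>\<in>P. c \<delta> *\<^sub>R \<delta>) \<and> (\<forall>\<delta>\<in>P. 0 \<le> c \<delta>)"
      using sum_ind[OF finP, of \<alpha> 1] by (intro exI[of _ "\<lambda>\<delta>. if \<delta> = \<alpha> then 1 else 0"]) auto
  qed simp
  then obtain \<Delta> where \<Delta>: "M \<Delta>" and minc: "\<And>\<Delta>'. M \<Delta>' \<Longrightarrow> card \<Delta> \<le> card \<Delta>'"
    using ex_has_least_nat[of M P card] by blast
  have \<Delta>P: "\<Delta> \<subseteq> P" using \<Delta> M_def by blast
  have fin: "finite \<Delta>" using \<Delta>P finP finite_subset by blast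
  have e\<Delta>: "\<forall>\<delta>\<in>\<Delta>. inner e \<delta> > 0" using eP \<Delta>P by blast
  have nored: "\<not> pcone (\<Delta>-{\<beta>}) \<beta>" if b: "\<beta> \<in> \<Delta>" for \<beta>
  proof
    assume h: "pcone (\<Delta>-{\<beta>}) \<beta>"
    have "M (\<Delta>-{\<beta>})" using \<Delta> pcone_subst[OF fin b _ h] unfolding M_def by blast
    hence "card \<Delta> \<le> card (\<Delta>-{\<beta>})" by (rule minc)
    moreover have "card (\<Delta>-{\<beta>}) < card \<Delta>" using fin b by (rule card_Diff1_less)
    ultimately show False by simp
  qed
  have obt: "inner a b \<le> 0" if ab: "a \<in> \<Delta>" "b \<in> \<Delta>" "a \<noteq> b" for a b
  proof (rule ccontr)
    assume "\<not> inner a b \<le> 0"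
    hence ab0: "inner b a > 0" by (simp add: inner_commute)
    have aX: "a \<in> X" "b \<in> X" using ab \<Delta>P PX by auto
    have a0: "a \<noteq> 0" using aX rs root_system_def by metis
    define c where "c = 2 * inner b a / inner a a"
    have c0: "c > 0" using ab0 a0 by (simp add: c_def)
    define \<gamma> where "\<gamma> = b - c *\<^sub>R a"
    have gX: "\<gamma> \<in> X" using rs aX unfolding root_system_def \<gamma>_def c_def refl_def by blast
    have ia: "(\<Sum>\<delta>\<in>\<Delta>. (if \<delta> = a then x else 0) *\<^sub>R \<delta>) = x *\<^sub>R a" for x
      by (rule sum_ind[OF fin ab(1)])
    have ib: "(\<Sum>\<delta>\<in>\<Delta>. (if \<delta> = b then x else 0) *\<^sub>R \<delta>) = x *\<^sub>R b" for x
      by (rule sum_ind[OF fin ab(2)])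
    have splitsum: "(\<Sum>\<delta>\<in>\<Delta>. (d \<delta> + (if \<delta> = b then x else 0) + (if \<delta> = a then y else 0)) *\<^sub>R \<delta>)
        = (\<Sum>\<delta>\<in>\<Delta>. d \<delta> *\<^sub>R \<delta>) + x *\<^sub>R b + y *\<^sub>R a" for d x y
      by (simp add: scaleR_add_left sum.distrib ia ib)
    from ch_sign[OF C gX] show False
    proof
      assume "\<forall>e\<in>C. 0 < inner e \<gamma>"
      hence "\<gamma> \<in> P" using gX by (auto simp: P_def pos_def)
      then obtain d where d: "\<gamma> = (\<Sum>\<delta>\<in>\<Delta>. d \<delta> *\<^sub>R \<delta>)" "\<forall>\<delta>\<in>\<Delta>. d \<delta> \<ge> 0"
        using \<Delta> M_def pcone_def by blast
      define g where "g \<delta> = d \<delta> + (if \<delta> = b then -1 else 0) + (if \<delta> = a then c else 0)" for \<delta>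
      have "(\<Sum>\<delta>\<in>\<Delta>. g \<delta> *\<^sub>R \<delta>) = 0"
        unfolding g_def splitsum d(1)[symmetric] by (simp add: \<gamma>_def)
      moreover have "\<forall>\<delta>\<in>\<Delta>-{b}. g \<delta> \<ge> 0" using d(2) c0 by (auto simp: g_def)
      moreover have "g a > 0" using d(2) c0 ab by (auto simp: g_def add_nonneg_pos)
      ultimately have "pcone (\<Delta>-{b}) b" using gen_elim[OF fin e\<Delta> _ ab(2), of g a] ab by blast
      thus False using nored ab(2) by blast
    next
      assume "\<forall>e\<in>C. inner e \<gamma> < 0"
      hence "- \<gamma> \<in> P" using rs_neg[OF rs gX] by (auto simp: P_def pos_def)
      then obtain d where d: "- \<gamma> = (\<Sum>\<delta>\<in>\<Delta>. d \<delta> *\<^sub>R \<delta>)" "\<forall>\<delta>\<in>\<Delta>. d \<delta> \<ge> 0"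
        using \<Delta> M_def pcone_def by blast
      define g where "g \<delta> = d \<delta> + (if \<delta> = b then 1 else 0) + (if \<delta> = a then -c else 0)" for \<delta>
      have "(\<Sum>\<delta>\<in>\<Delta>. g \<delta> *\<^sub>R \<delta>) = 0"
        unfolding g_def splitsum d(1)[symmetric] by (simp add: \<gamma>_def)
      moreover have "\<forall>\<delta>\<in>\<Delta>-{a}. g \<delta> \<ge> 0" using d(2) c0 ab by (auto simp: g_def)
      moreover have "g b > 0" using d(2) c0 ab by (auto simp: g_def add_nonneg_pos)
      ultimately have "pcone (\<Delta>-{a}) a" using gen_elim[OF fin e\<Delta> _ ab(1), of g b] ab by blast
      thus False using nored ab(1) by blast
    qed
  qed
  have ind: "independent \<Delta>" using obtuse_indep[OF fin e\<Delta>] obt by blast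
  have "simple_system X \<Delta>" unfolding simple_system_def
  proof (intro conjI ballI)
    show "finite \<Delta>" "\<Delta> \<subseteq> X" "independent \<Delta>" using fin \<Delta>P PX ind by auto
    fix \<alpha> assume aX: "\<alpha> \<in> X"
    from ch_sign[OF C aX]
    show "\<exists>c. \<alpha> = (\<Sum>\<delta>\<in>\<Delta>. c \<delta> *\<^sub>R \<delta>) \<and> ((\<forall>\<delta>\<in>\<Delta>. 0 \<le> c \<delta>) \<or> (\<forall>\<delta>\<in>\<Delta>. c \<delta> \<le> 0))"
    proof
      assume "\<forall>e\<in>C. 0 < inner e \<alpha>"
      hence "\<alpha> \<in> P" using aX by (auto simp: P_def pos_def)
      thus ?thesis using \<Delta> M_def pcone_def by metis
    next
      assume "\<forall>e\<in>C. inner e \<alpha> < 0"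
      hence "- \<alpha> \<in> P" using rs_neg[OF rs aX] by (auto simp: P_def pos_def)
      then obtain d where d: "- \<alpha> = (\<Sum>\<delta>\<in>\<Delta>. d \<delta> *\<^sub>R \<delta>)" "\<forall>\<delta>\<in>\<Delta>. d \<delta> \<ge> 0"
        using \<Delta> M_def pcone_def by blast
      have "\<alpha> = (\<Sum>\<delta>\<in>\<Delta>. (- d \<delta>) *\<^sub>R \<delta>)" using d(1) by (simp add: sum_negf) (metis minus_minus)
      thus ?thesis using d(2) by (intro exI[of _ "\<lambda>\<delta>. - d \<delta>"]) auto
    qed
  qed
  thus ?thesis using \<Delta>P P_def by blast
qed



lemma pos_coeffs:
  assumes "simple_system X S" "S \<subseteq> pos X C" "\<alpha> \<in> X" "e \<in> C" "inner e \<alpha> > 0"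
  shows "\<exists>c. \<alpha> = (\<Sum>s\<in>S. c s *\<^sub>R s) \<and> (\<forall>s\<in>S. c s \<ge> 0)"
proof -
  obtain c where c: "\<alpha> = (\<Sum>s\<in>S. c s *\<^sub>R s)" "(\<forall>s\<in>S. c s \<ge> 0) \<or> (\<forall>s\<in>S. c s \<le> 0)"
    using assms(1,3) unfolding simple_system_def by blast
  have fin: "finite S" using assms(1) simple_system_def by blast
  have "\<not> (\<forall>s\<in>S. c s \<le> 0) \<or> (\<forall>s\<in>S. c s \<ge> 0)"
  proof (rule ccontr)
    assume h: "\<not> ?thesis"
    hence "(\<Sum>s\<in>S. c s * inner e s) \<le> 0"
    proof (intro sum_nonpos)
      fix s assume "s \<in> S"
      hence "c s \<le> 0" "inner e s \<ge> 0" using h assms(2,4) by (auto simp: pos_def inner_commute less_imp_le)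
      thus "c s * inner e s \<le> 0" by (rule mult_nonpos_nonneg)
    qed
    moreover have "(\<Sum>s\<in>S. c s * inner e s) = inner e \<alpha>" using c(1) by (simp add: inner_sum_right)
    ultimately show False using assms(5) by simp
  qed
  thus ?thesis using c by blast
qed

lemma indep_coeff:
  fixes S :: "'a::euclidean_space set"
  assumes "finite S" "independent S" "(\<Sum>t\<in>S. a t *\<^sub>R t) = (\<Sum>t\<in>S. b t *\<^sub>R t)" "t \<in> S"
  shows "a t = b t"
proof (rule ccontr)
  assume h: "a t \<noteq> b t"
  have "(\<Sum>t\<in>S. (a t - b t) *\<^sub>R t) = 0" using assms(3) by (simp add: scaleR_diff_left sum_subtractf)
  hence "dependent S" using dependent_finite[OF assms(1)] h assms(4)
    by (intro iffD2[OF dependent_finite[OF assms(1)]] exI[of _ "\<lambda>t. a t - b t"]) auto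
  thus False using assms(2) by simp
qed

lemma simple_sub:
  fixes X :: "'a::euclidean_space set"
  assumes rs: "root_system X" and C: "C \<in> Ch X"
    and S: "simple_system X S" "S \<subseteq> pos X C" and S': "simple_system X S'" "S' \<subseteq> pos X C"
  shows "S' \<subseteq> S"
proof
  fix s' assume s': "s' \<in> S'"
  obtain e where e: "e \<in> C" using ch_basic(1)[OF C] by blast
  have finS: "finite S" and finS': "finite S'" and indS': "independent S'"
    using S S' simple_system_def by blast+
  have SX: "S \<subseteq> X" "S' \<subseteq> X" using S S' simple_system_def by blast+
  have pe: "\<And>x. x \<in> pos X C \<Longrightarrow> inner e x > 0" using e by (auto simp: pos_def)
  obtain c where c: "s' = (\<Sum>s\<in>S. c s *\<^sub>R s)" "\<forall>s\<in>S. c s \<ge> 0"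
    using pos_coeffs[OF S _ e] s' SX S' pe by blast
  have "\<forall>s\<in>S. \<exists>d. s = (\<Sum>t\<in>S'. d t *\<^sub>R t) \<and> (\<forall>t\<in>S'. d t \<ge> 0)"
    using pos_coeffs[OF S' _ e] SX S pe by blast
  then obtain d where d: "\<And>s. s \<in> S \<Longrightarrow> s = (\<Sum>t\<in>S'. d s t *\<^sub>R t) \<and> (\<forall>t\<in>S'. d s t \<ge> 0)"
    by metis
  have "s' = (\<Sum>s\<in>S. c s *\<^sub>R (\<Sum>t\<in>S'. d s t *\<^sub>R t))"
    unfolding c(1)
  proof (rule sum.cong[OF refl])
    fix s assume "s \<in> S"
    hence "s = (\<Sum>t\<in>S'. d s t *\<^sub>R t)" using d by blast
    thus "c s *\<^sub>R s = c s *\<^sub>R (\<Sum>t\<in>S'. d s t *\<^sub>R t)" by (rule arg_cong)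
  qed
  also have "\<dots> = (\<Sum>t\<in>S'. (\<Sum>s\<in>S. c s * d s t) *\<^sub>R t)"
    by (simp add: scaleR_sum_right scaleR_sum_left sum.swap[of _ S'])
  finally have e1: "(\<Sum>t\<in>S'. (\<Sum>s\<in>S. c s * d s t) *\<^sub>R t) = (\<Sum>t\<in>S'. (if t = s' then 1 else 0) *\<^sub>R t)"
    using sum_ind[OF finS' s', of 1] by simp
  have coef: "(\<Sum>s\<in>S. c s * d s t) = (if t = s' then 1 else 0)" if "t \<in> S'" for t
    using indep_coeff[OF finS' indS' e1 that] .
  have "s' \<noteq> 0" using s' SX rs root_system_def by blast
  moreover have "(\<forall>s\<in>S. c s = 0) \<Longrightarrow> (\<Sum>s\<in>S. c s *\<^sub>R s) = 0" by simp
  ultimately obtain s0 where s0: "s0 \<in> S" "c s0 \<noteq> 0" using c(1) by blast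
  hence cs0: "c s0 > 0" using c(2) by (simp add: less_le)
  have dz: "d s0 t = 0" if t: "t \<in> S'" "t \<noteq> s'" for t
  proof -
    have "(\<Sum>s\<in>S. c s * d s t) = 0" using coef[OF t(1)] t(2) by simp
    moreover have "\<forall>s\<in>S. c s * d s t \<ge> 0"
    proof
      fix s assume s: "s \<in> S"
      hence "d s t \<ge> 0" using d t(1) by blast
      thus "c s * d s t \<ge> 0" using c(2) s by simp
    qed
    ultimately have "\<forall>s\<in>S. c s * d s t = 0"
      using sum_nonneg_eq_0_iff[OF finS, of "\<lambda>s. c s * d s t"] by simp
    hence "c s0 * d s0 t = 0" using s0(1) by blast
    thus ?thesis using cs0 by simp
  qed
  have A1: "s0 = (\<Sum>t\<in>S'. d s0 t *\<^sub>R t)" using d s0(1) by blast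
  have A2: "(\<Sum>t\<in>S'. d s0 t *\<^sub>R t) = d s0 s' *\<^sub>R s' + (\<Sum>t\<in>S'-{s'}. d s0 t *\<^sub>R t)"
    using sum.remove[OF finS' s'] by blast
  have B: "(\<Sum>t\<in>S'-{s'}. d s0 t *\<^sub>R t) = 0" using dz by (intro sum.neutral) auto
  have E: "d s0 s' *\<^sub>R s' + (\<Sum>t\<in>S'-{s'}. d s0 t *\<^sub>R t) = d s0 s' *\<^sub>R s'" using B by simp
  have s0e': "s0 = d s0 s' *\<^sub>R s'" using trans[OF trans[OF A1 A2] E] .
  define l where "l = d s0 s'"
  have s0e: "s0 = l *\<^sub>R s'" unfolding l_def by (rule s0e')
  have "l = 1 \<or> l = -1"
  proof -
    have red: "\<forall>\<alpha>\<in>X. \<forall>c::real. c *\<^sub>R \<alpha> \<in> X \<longrightarrow> c = 1 \<or> c = -1" using rs unfolding root_system_def by (elim conjE) assumption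
    have "s' \<in> X" "s0 \<in> X" using SX s' s0(1) by auto
    hence "s' \<in> X" "l *\<^sub>R s' \<in> X" using s0e by auto
    thus ?thesis using red by blast
  qed
  moreover have "l \<noteq> -1"
  proof
    assume "l = -1"
    hence "s0 = - s'" using s0e by simp
    moreover have "inner e s0 > 0" "inner e s' > 0" using pe S(2) S'(2) s0(1) s' by auto
    ultimately show False by simp
  qed
  ultimately have "s0 = s'" using s0e by simp
  thus "s' \<in> S" using s0(1) by simp
qed

lemma simple_props:
  fixes X :: "'a::euclidean_space set"
  assumes rs: "root_system X" and C: "C \<in> Ch X"
  shows "simple_system X (simple X C) \<and> simple X C \<subseteq> pos X C"
proof -
  obtain S where S: "simple_system X S" "S \<subseteq> pos X C" using simple_exists[OF assms] by blast
  have "simple X C = S" unfolding simple_def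
    by (rule the_equality) (use S simple_sub[OF assms] in blast)+
  thus ?thesis using S by simp
qed



lemma rs_sub:
  assumes "root_system \<Phi>" "root_subsystem \<Phi> \<Psi>"
  shows "root_system \<Psi>"
proof -
  have "\<Psi> \<subseteq> \<Phi>" using assms(2) root_subsystem_def by blast
  thus ?thesis using assms unfolding root_system_def root_subsystem_def
    by (meson finite_subset subsetD)
qed

lemma core_pos:
  fixes \<Phi> :: "'a::euclidean_space set"
  assumes rs: "root_system \<Phi>" and sub: "root_subsystem \<Phi> \<Psi>" and D: "D \<in> Ch \<Phi>" and C: "C \<in> Ch \<Phi>"
    and lift: "lifts_ch \<Phi> \<Psi> D (restr \<Psi> C)" and b: "\<beta> \<in> \<Psi>"
    and posC: "\<forall>e\<in>restr \<Psi> C. inner e \<beta> > 0"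
  shows "\<forall>e\<in>D. inner e \<beta> > 0"
proof
  fix e assume e: "e \<in> D"
  have PsPh: "\<Psi> \<subseteq> \<Phi>" using sub root_subsystem_def by blast
  have rsP: "root_system \<Psi>" using rs_sub[OF rs sub] .
  define C' where "C' = restr \<Psi> C"
  have C': "C' \<in> Ch \<Psi>" using restr_ex[OF PsPh C] C'_def by blast
  obtain e0 where e0: "e0 \<in> C'" using ch_basic(1)[OF C'] by blast
  have S: "simple_system \<Psi> (simple \<Psi> C')" "simple \<Psi> C' \<subseteq> pos \<Psi> C'"
    using simple_props[OF rsP C'] by blast+
  obtain c where c: "\<beta> = (\<Sum>s\<in>simple \<Psi> C'. c s *\<^sub>R s)" "\<forall>s\<in>simple \<Psi> C'. c s \<ge> 0"
    using pos_coeffs[OF S b e0] posC e0 C'_def by blast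
  have T: "simple \<Phi> D \<subseteq> pos \<Phi> D" using simple_props[OF rs D] by blast
  have ST: "simple \<Psi> C' \<subseteq> simple \<Phi> D" using lift C'_def lifts_ch_def by blast
  have fin: "finite (simple \<Psi> C')" using S simple_system_def by blast
  have "0 \<le> (\<Sum>s\<in>simple \<Psi> C'. c s * inner e s)"
  proof (intro sum_nonneg)
    fix s assume s: "s \<in> simple \<Psi> C'"
    hence "s \<in> pos \<Phi> D" using ST T by blast
    hence "inner e s > 0" using e by (simp add: pos_def)
    thus "0 \<le> c s * inner e s" using c(2) s by simp
  qed
  also have "\<dots> = inner e \<beta>" using c(1) by (simp add: inner_sum_right)
  finally have "0 \<le> inner e \<beta>" .
  moreover have "inner e \<beta> \<noteq> 0" using ch_avoid[OF D _ e] b PsPh by blast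
  ultimately show "inner e \<beta> > 0" by simp
qed

lemma core:
  fixes \<Phi> :: "'a::euclidean_space set"
  assumes rs: "root_system \<Phi>" and sub: "root_subsystem \<Phi> \<Psi>" and D: "D \<in> Ch \<Phi>" and C: "C \<in> Ch \<Phi>"
    and lift: "lifts_ch \<Phi> \<Psi> D (restr \<Psi> C)" and b: "\<beta> \<in> \<Psi>"
  shows "\<not> separates (hyp \<beta>) D C"
proof
  assume "separates (hyp \<beta>) D C"
  then obtain u where u: "u \<noteq> 0" "hyp \<beta> = hyp u" "\<forall>x\<in>D. inner x u > 0" "\<forall>y\<in>C. inner y u < 0"
    unfolding separates_def by blast
  have PsPh: "\<Psi> \<subseteq> \<Phi>" using sub root_subsystem_def by blast
  have b0: "\<beta> \<noteq> 0" using b PsPh rs root_system_def by blast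
  define t where "t = inner u \<beta> / inner \<beta> \<beta>"
  have ut: "u = t *\<^sub>R \<beta>" unfolding t_def using hyp_sub_parallel[OF b0] u(2) by simp
  define C' where "C' = restr \<Psi> C"
  have C': "C' \<in> Ch \<Psi>" "C \<subseteq> C'" using restr_ex[OF PsPh C] C'_def by blast+
  obtain e where e: "e \<in> D" using ch_basic(1)[OF D] by blast
  obtain x where x: "x \<in> C" using ch_basic(1)[OF C] by blast
  have ue: "t * inner e \<beta> > 0" using u(3) e ut by simp
  have ux: "t * inner x \<beta> < 0" using u(4) x ut by simp
  from ch_sign[OF C'(1) b] show False
  proof
    assume h: "\<forall>e\<in>C'. 0 < inner e \<beta>"
    hence "inner e \<beta> > 0" using core_pos[OF rs sub D C lift b] e C'_def by blast
    hence "t > 0" using ue by (simp add: zero_less_mult_iff)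
    moreover have "inner x \<beta> > 0" using h x C'(2) by blast
    ultimately show False using ux mult_pos_pos[of t "inner x \<beta>"] by linarith
  next
    assume h: "\<forall>e\<in>C'. inner e \<beta> < 0"
    have nb: "- \<beta> \<in> \<Psi>" using sub b refl_self[OF b0] unfolding root_subsystem_def by metis
    have "\<forall>e\<in>C'. 0 < inner e (- \<beta>)" using h by simp
    hence "inner e (- \<beta>) > 0" using core_pos[OF rs sub D C lift nb] e C'_def by blast
    hence "t < 0" using ue by (simp add: zero_less_mult_iff)
    moreover have "inner x \<beta> < 0" using h x C'(2) by blast
    ultimately show False using ux mult_neg_neg[of t "inner x \<beta>"] by linarith
  qed
qed



lemma chain:
  fixes \<Phi> :: "'a::euclidean_space set"
  assumes rs: "root_system \<Phi>" and sub: "\<Psi> \<subseteq> \<Phi>" and G: "is_gallery \<Phi> \<Gamma>"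
    and ab: "a \<le> b" "b \<le> glen \<Gamma>"
    and nw: "\<forall>m. a < m \<and> m \<le> b \<longrightarrow> \<not> (\<exists>\<beta>\<in>\<Psi>. wall \<Gamma> m = hyp \<beta>)"
  shows "restr \<Psi> (chamber \<Gamma> a) = restr \<Psi> (chamber \<Gamma> b)"
  using ab nw
proof (induction b)
  case 0 thus ?case by simp
next
  case (Suc n)
  show ?case
  proof (cases "a = Suc n")
    case True thus ?thesis by simp
  next
    case False
    hence an: "a \<le> n" using Suc.prems(1) by simp
    have IH: "restr \<Psi> (chamber \<Gamma> a) = restr \<Psi> (chamber \<Gamma> n)" using Suc an by simp
    have fin: "finite \<Phi>" "0 \<notin> \<Phi>" using rs root_system_def by blast+
    have n1: "Suc n \<in> {1..glen \<Gamma>}" using Suc.prems by simp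
    obtain \<alpha> where al: "\<alpha> \<in> \<Phi>" "wall \<Gamma> (Suc n) = hyp \<alpha>"
      "connected_through (chamber \<Gamma> n) (chamber \<Gamma> (Suc n)) (wall \<Gamma> (Suc n))"
      using G n1 unfolding is_gallery_def by fastforce
    have chs: "chamber \<Gamma> n \<in> Ch \<Phi>" "chamber \<Gamma> (Suc n) \<in> Ch \<Phi>"
      using G Suc.prems unfolding is_gallery_def by auto
    have "\<forall>\<beta>\<in>\<Psi>. hyp \<alpha> \<noteq> hyp \<beta>" using Suc.prems(3) an al(2) by auto
    hence "restr \<Psi> (chamber \<Gamma> n) = restr \<Psi> (chamber \<Gamma> (Suc n))"
      using crossing[OF fin sub chs al(1)] al(2,3) by simp
    thus ?thesis using IH by simp
  qed
qed

definition offs :: "'a gallery list \<Rightarrow> nat \<Rightarrow> nat" where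
  "offs Ds n = (\<Sum>m<n. glen (Ds!m))"

lemma offs_Cons: "offs (D # Ds) (Suc n) = glen D + offs Ds n"
  unfolding offs_def by (subst sum.lessThan_Suc_shift) simp

lemma offs_0: "offs Ds 0 = 0" by (simp add: offs_def)

lemma gconcat_props:
  assumes "Ds \<noteq> []" "\<forall>D\<in>set Ds. length (fst D) = Suc (glen D)"
    "\<forall>n. Suc n < length Ds \<longrightarrow> final_ch (Ds!n) = init_ch (Ds!Suc n)"
  shows "length (fst (gconcat Ds)) = Suc (glen (gconcat Ds)) \<and>
    glen (gconcat Ds) = offs Ds (length Ds) \<and>
    (\<forall>n<length Ds. \<forall>j\<le>glen (Ds!n). chamber (gconcat Ds) (offs Ds n + j) = chamber (Ds!n) j) \<and>
    (\<forall>n<length Ds. \<forall>j\<in>{1..glen (Ds!n)}. wall (gconcat Ds) (offs Ds n + j) = wall (Ds!n) j)"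
  using assms
proof (induction Ds rule: gconcat.induct)
  case 1 thus ?case by simp
next
  case (2 \<Gamma>)
  thus ?case by (simp add: offs_def)
next
  case (3 \<Gamma> \<Delta> \<Delta>s)
  define R where "R = gconcat (\<Delta> # \<Delta>s)"
  have IH: "length (fst R) = Suc (glen R) \<and> glen R = offs (\<Delta> # \<Delta>s) (length (\<Delta> # \<Delta>s)) \<and>
    (\<forall>n<length (\<Delta> # \<Delta>s). \<forall>j\<le>glen ((\<Delta> # \<Delta>s)!n). chamber R (offs (\<Delta> # \<Delta>s) n + j) = chamber ((\<Delta> # \<Delta>s)!n) j) \<and>
    (\<forall>n<length (\<Delta> # \<Delta>s). \<forall>j\<in>{1..glen ((\<Delta> # \<Delta>s)!n)}. wall R (offs (\<Delta> # \<Delta>s) n + j) = wall ((\<Delta> # \<Delta>s)!n) j)"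
    unfolding R_def
  proof (rule 3(1))
    show "\<forall>D\<in>set (\<Delta> # \<Delta>s). length (fst D) = Suc (glen D)" using 3(3) by simp
    show "\<forall>n. Suc n < length (\<Delta> # \<Delta>s) \<longrightarrow> final_ch ((\<Delta> # \<Delta>s) ! n) = init_ch ((\<Delta> # \<Delta>s) ! Suc n)"
    proof (intro allI impI)
      fix n assume "Suc n < length (\<Delta> # \<Delta>s)"
      thus "final_ch ((\<Delta> # \<Delta>s) ! n) = init_ch ((\<Delta> # \<Delta>s) ! Suc n)"
        using 3(4)[rule_format, of "Suc n"] by simp
    qed
  qed simp
  have G: "gconcat (\<Gamma> # \<Delta> # \<Delta>s) = gappend \<Gamma> R" by (simp add: R_def)
  have LG: "length (fst \<Gamma>) = Suc (glen \<Gamma>)" using 3(3) by simp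
  have fin: "final_ch \<Gamma> = init_ch \<Delta>" using 3(4)[rule_format, of 0] by simp
  have R0: "chamber R 0 = chamber \<Delta> 0" using IH[THEN conjunct2, THEN conjunct2, THEN conjunct1, rule_format, of 0 0]
    by (simp add: offs_0)
  have LR: "length (fst R) = Suc (glen R)" using IH by blast
  have chA: "chamber (gappend \<Gamma> R) x = chamber \<Gamma> x" if "x \<le> glen \<Gamma>" for x
    using that LG by (simp add: chamber_def gappend_def nth_append)
  have chB: "chamber (gappend \<Gamma> R) (glen \<Gamma> + y) = chamber R y" if "y \<le> glen R" for y
  proof (cases y)
    case 0
    thus ?thesis using chA[of "glen \<Gamma>"] fin R0 by (simp add: final_ch_def init_ch_def)
  next
    case (Suc y')
    have "fst R \<noteq> []" using LR by auto
    thus ?thesis using Suc LG that LR by (simp add: chamber_def gappend_def nth_append nth_tl)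
  qed
  have wA: "wall (gappend \<Gamma> R) x = wall \<Gamma> x" if "x \<in> {1..glen \<Gamma>}" for x
    using that by (auto simp: wall_def gappend_def nth_append glen_def)
  have wB: "wall (gappend \<Gamma> R) (glen \<Gamma> + y) = wall R y" if "y \<in> {1..glen R}" for y
    using that by (auto simp: wall_def gappend_def nth_append glen_def)
  have glenG: "glen (gappend \<Gamma> R) = glen \<Gamma> + glen R" by (simp add: glen_def gappend_def)
  show ?case unfolding G
  proof (intro conjI allI impI ballI)
    show "length (fst (gappend \<Gamma> R)) = Suc (glen (gappend \<Gamma> R))"
      using LG LR glenG by (simp add: gappend_def)
    show "glen (gappend \<Gamma> R) = offs (\<Gamma> # \<Delta> # \<Delta>s) (length (\<Gamma> # \<Delta> # \<Delta>s))"
      using glenG IH by (simp add: offs_Cons)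
  next
    fix n j assume n: "n < length (\<Gamma> # \<Delta> # \<Delta>s)" and j: "j \<le> glen ((\<Gamma> # \<Delta> # \<Delta>s) ! n)"
    show "chamber (gappend \<Gamma> R) (offs (\<Gamma> # \<Delta> # \<Delta>s) n + j) = chamber ((\<Gamma> # \<Delta> # \<Delta>s) ! n) j"
    proof (cases n)
      case 0 thus ?thesis using j chA by (simp add: offs_0)
    next
      case (Suc n')
      have n': "n' < length (\<Delta> # \<Delta>s)" using n Suc by simp
      have jR: "offs (\<Delta> # \<Delta>s) n' + j \<le> glen R"
      proof -
        have "offs (\<Delta> # \<Delta>s) (Suc n') \<le> offs (\<Delta> # \<Delta>s) (length (\<Delta> # \<Delta>s))"
          unfolding offs_def using n' by (intro sum_mono2) auto
        moreover have "offs (\<Delta> # \<Delta>s) (Suc n') = offs (\<Delta> # \<Delta>s) n' + glen ((\<Delta> # \<Delta>s) ! n')"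
          by (simp add: offs_def)
        ultimately show ?thesis using IH j Suc by simp
      qed
      have "chamber (gappend \<Gamma> R) (offs (\<Gamma> # \<Delta> # \<Delta>s) n + j) = chamber R (offs (\<Delta> # \<Delta>s) n' + j)"
        using chB[OF jR] Suc by (simp add: offs_Cons add.assoc)
      also have "\<dots> = chamber ((\<Delta> # \<Delta>s) ! n') j" using IH n' j Suc by simp
      finally show ?thesis using Suc by simp
    qed
  next
    fix n j assume n: "n < length (\<Gamma> # \<Delta> # \<Delta>s)" and j: "j \<in> {1..glen ((\<Gamma> # \<Delta> # \<Delta>s) ! n)}"
    show "wall (gappend \<Gamma> R) (offs (\<Gamma> # \<Delta> # \<Delta>s) n + j) = wall ((\<Gamma> # \<Delta> # \<Delta>s) ! n) j"
    proof (cases n)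
      case 0 thus ?thesis using j wA by (simp add: offs_0)
    next
      case (Suc n')
      have n': "n' < length (\<Delta> # \<Delta>s)" using n Suc by simp
      have jR: "offs (\<Delta> # \<Delta>s) n' + j \<in> {1..glen R}"
      proof -
        have "offs (\<Delta> # \<Delta>s) (Suc n') \<le> offs (\<Delta> # \<Delta>s) (length (\<Delta> # \<Delta>s))"
          unfolding offs_def using n' by (intro sum_mono2) auto
        moreover have "offs (\<Delta> # \<Delta>s) (Suc n') = offs (\<Delta> # \<Delta>s) n' + glen ((\<Delta> # \<Delta>s) ! n')"
          by (simp add: offs_def)
        ultimately show ?thesis using IH j Suc by simp
      qed
      have "wall (gappend \<Gamma> R) (offs (\<Gamma> # \<Delta> # \<Delta>s) n + j) = wall R (offs (\<Delta> # \<Delta>s) n' + j)"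
        using wB[OF jR] Suc by (simp add: offs_Cons add.assoc)
      also have "\<dots> = wall ((\<Delta> # \<Delta>s) ! n') j" using IH n' j Suc by simp
      finally show ?thesis using Suc by simp
    qed
  qed
qed



lemma block_ex:
  fixes f :: "nat \<Rightarrow> nat"
  shows "0 < j \<Longrightarrow> j \<le> (\<Sum>m<K. f m) \<Longrightarrow> \<exists>l<K. (\<Sum>m<l. f m) < j \<and> j \<le> (\<Sum>m<Suc l. f m)"
proof (induction K)
  case 0 thus ?case by simp
next
  case (Suc K)
  show ?case
  proof (cases "j \<le> (\<Sum>m<K. f m)")
    case True thus ?thesis using Suc by (meson less_SucI)
  next
    case False thus ?thesis using Suc.prems by (intro exI[of _ K]) auto
  qed
qed

lemma sum_mono_idx: assumes "(l::nat) \<le> l'" shows "(\<Sum>m<l. f m) \<le> (\<Sum>m<l'. (f m::nat))"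
proof (rule sum_mono2)
  show "{..<l} \<subseteq> {..<l'}" using assms by auto
qed auto

lemma sorted_pl:
  fixes f :: "nat \<Rightarrow> nat"
  assumes "strict_mono_on {1..n} f" "f ` {1..n} = A"
  shows "sorted_list_of_set A = map f [1..<Suc n]"
proof -
  have sw: "sorted_wrt (<) (map f [1..<Suc n])"
    unfolding sorted_wrt_iff_nth_less using assms(1)
    by (auto simp: strict_mono_on_def nth_append)
  have "set (map f [1..<Suc n]) = A" using assms(2) by auto
  thus ?thesis using sw sorted_list_of_set.idem_if_sorted_distinct strict_sorted_iff by metis
qed

lemma sg_props:
  assumes "length (fst \<Gamma>) = Suc (glen \<Gamma>)" "a \<le> b" "b \<le> glen \<Gamma>"
  shows "glen (subgallery \<Gamma> a b) = b - a"
    "\<And>j. j \<le> b - a \<Longrightarrow> chamber (subgallery \<Gamma> a b) j = chamber \<Gamma> (a + j)"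
    "\<And>j. j \<in> {1..b-a} \<Longrightarrow> wall (subgallery \<Gamma> a b) j = wall \<Gamma> (a + j)"
  using assms by (auto simp: glen_def subgallery_def chamber_def wall_def nth_take nth_drop)



theorem mainTheorem9:
  fixes \<Phi> :: "'a::euclidean_space set"
    and \<Gamma> :: "'a gallery"
    and k :: nat
    and i :: "nat \<Rightarrow> nat"
    and \<Psi> :: "nat \<Rightarrow> 'a set"
    and \<Delta> :: "nat \<Rightarrow> 'a gallery"
    and pl :: "nat \<Rightarrow> nat \<Rightarrow> nat"
    and p :: "nat \<Rightarrow> nat"
  assumes "root_system \<Phi>"
    and "is_gallery \<Phi> \<Gamma>"
    and "0 < k"
    and "i 0 = 0" and "\<forall>l<k. i l \<le> i (Suc l)" and "i k = glen \<Gamma>"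
    and "\<forall>l<k. root_subsystem \<Phi> (\<Psi> l) \<and> saturated \<Phi> (\<Psi> l)"
    and "\<forall>l<k. is_gallery \<Phi> (\<Delta> l)
                \<and> lifts \<Phi> (\<Psi> l) (\<Delta> l) (grestr (\<Psi> l) (subgallery \<Gamma> (i l) (i (Suc l))))"
    and "\<forall>l. Suc l < k \<longrightarrow> final_ch (\<Delta> l) = init_ch (\<Delta> (Suc l))"
    and "\<forall>l<k. strict_mono_on {1..glen (\<Delta> l)} (pl l)
                \<and> pl l ` {1..glen (\<Delta> l)} = Iset (\<Psi> l) (subgallery \<Gamma> (i l) (i (Suc l)))"
    and "\<forall>l<k. \<forall>j. (\<Sum>m<l. glen (\<Delta> m)) < j \<and> j \<le> (\<Sum>m\<le>l. glen (\<Delta> m))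
                \<longrightarrow> p j = pl l (j - (\<Sum>m<l. glen (\<Delta> m))) + i l"
  shows "ppair (gconcat (map \<Delta> [0..<k])) \<Gamma> p
       \<and> positive_sign (gconcat (map \<Delta> [0..<k])) \<Gamma> p
       \<and> positive_cosign (gconcat (map \<Delta> [0..<k])) \<Gamma> p"
proof -
  define Ds where "Ds = map \<Delta> [0..<k]"
  define s where "s l = (\<Sum>m<l. glen (\<Delta> m))" for l
  define GG where "GG = gconcat Ds"
  define SG where "SG l = subgallery \<Gamma> (i l) (i (Suc l))" for l
  define idx where "idx l = sorted_list_of_set (Iset (\<Psi> l) (SG l))" for l
  have lenDs: "length Ds = k" by (simp add: Ds_def)
  have Dsn: "n < k \<Longrightarrow> Ds ! n = \<Delta> n" for n by (simp add: Ds_def)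
  have offs_eq: "offs Ds n = s n" if "n \<le> k" for n
    unfolding offs_def s_def using that by (intro sum.cong) (auto simp: Dsn)
  have galD: "is_gallery \<Phi> (\<Delta> l)" if "l < k" for l using assms(8) that by blast
  have liftD: "lifts \<Phi> (\<Psi> l) (\<Delta> l) (grestr (\<Psi> l) (SG l))" if "l < k" for l
    unfolding SG_def using assms(8) that by blast
  have subD: "root_subsystem \<Phi> (\<Psi> l)" if "l < k" for l using assms(7) that by blast
  have PsPh: "\<Psi> l \<subseteq> \<Phi>" if "l < k" for l using subD[OF that] unfolding root_subsystem_def by blast
  have lenD: "length (fst (\<Delta> l)) = Suc (glen (\<Delta> l))" if "l < k" for l
    using galD[OF that] unfolding is_gallery_def by blast
  have GP: "length (fst (gconcat Ds)) = Suc (glen (gconcat Ds)) \<and>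
    glen (gconcat Ds) = offs Ds (length Ds) \<and>
    (\<forall>n<length Ds. \<forall>j\<le>glen (Ds!n). chamber (gconcat Ds) (offs Ds n + j) = chamber (Ds!n) j) \<and>
    (\<forall>n<length Ds. \<forall>j\<in>{1..glen (Ds!n)}. wall (gconcat Ds) (offs Ds n + j) = wall (Ds!n) j)"
  proof (rule gconcat_props)
    show "Ds \<noteq> []" using assms(3) lenDs by auto
    show "\<forall>D\<in>set Ds. length (fst D) = Suc (glen D)" using lenD by (auto simp: Ds_def)
    show "\<forall>n. Suc n < length Ds \<longrightarrow> final_ch (Ds ! n) = init_ch (Ds ! Suc n)"
      using assms(9) lenDs Dsn by auto
  qed
  have glenG: "glen GG = s k" using GP offs_eq[of k] lenDs GG_def by simp
  have chG: "chamber GG (s l + j) = chamber (\<Delta> l) j" if "l < k" "j \<le> glen (\<Delta> l)" for l j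
    using GP that offs_eq[of l] lenDs Dsn[of l] GG_def by auto
  have wG: "wall GG (s l + j) = wall (\<Delta> l) j" if "l < k" "j \<in> {1..glen (\<Delta> l)}" for l j
    using GP that offs_eq[of l] lenDs Dsn[of l] GG_def by auto
  have imono: "i l \<le> i l'" if "l \<le> l'" "l' \<le> k" for l l'
    using that
  proof (induction l')
    case 0 thus ?case by simp
  next
    case (Suc n)
    show ?case
    proof (cases "l = Suc n")
      case False
      hence "l \<le> n" "n < k" using Suc.prems by auto
      hence "i l \<le> i n" "i n \<le> i (Suc n)" using Suc.IH assms(5) by auto
      thus ?thesis by simp
    qed simp
  qed
  have ik: "i l \<le> glen \<Gamma>" if "l \<le> k" for l using imono[OF that order.refl] assms(6) by simp
  have LG: "length (fst \<Gamma>) = Suc (glen \<Gamma>)" using assms(2) unfolding is_gallery_def by blast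
  have il: "i l \<le> i (Suc l)" if "l < k" for l using assms(5) that by blast
  have sg1: "glen (SG l) = i (Suc l) - i l" if "l < k" for l
    using sg_props(1)[OF LG il[OF that] ik[of "Suc l"]] that SG_def by simp
  have sg2: "chamber (SG l) j = chamber \<Gamma> (i l + j)" if "l < k" "j \<le> i (Suc l) - i l" for l j
    using sg_props(2)[OF LG il[OF that(1)] ik[of "Suc l"]] that SG_def by simp
  have sg3: "wall (SG l) j = wall \<Gamma> (i l + j)" if "l < k" "j \<in> {1..i (Suc l) - i l}" for l j
    using sg_props(3)[OF LG il[OF that(1)] ik[of "Suc l"]] that SG_def by simp
  have IsetD: "m \<in> Iset (\<Psi> l) (SG l) \<longleftrightarrow> m \<in> {1..i (Suc l) - i l} \<and> (\<exists>\<beta>\<in>\<Psi> l. wall \<Gamma> (i l + m) = hyp \<beta>)"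
    if "l < k" for l m
    using sg1[OF that] sg3[OF that] unfolding Iset_def by auto
  have plmono: "strict_mono_on {1..glen (\<Delta> l)} (pl l)" if "l < k" for l using assms(10) that by blast
  have plimg: "pl l ` {1..glen (\<Delta> l)} = Iset (\<Psi> l) (SG l)" if "l < k" for l
    unfolding SG_def using assms(10) that by blast
  have idx_eq: "idx l = map (pl l) [1..<Suc (glen (\<Delta> l))]" if "l < k" for l
    unfolding idx_def by (rule sorted_pl[OF plmono[OF that] plimg[OF that]])
  have pl_idx: "idx l ! (j - 1) = pl l j" if "l < k" "j \<in> {1..glen (\<Delta> l)}" for l j
  proof -
    have "j - 1 < length [1..<Suc (glen (\<Delta> l))]" using that(2) by auto
    hence "map (pl l) [1..<Suc (glen (\<Delta> l))] ! (j - 1) = pl l ([1..<Suc (glen (\<Delta> l))] ! (j - 1))"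
      by (rule nth_map)
    also have "[1..<Suc (glen (\<Delta> l))] ! (j - 1) = j" using that(2) by (subst nth_upt) auto
    finally show ?thesis using idx_eq[OF that(1)] by simp
  qed
  have len_idx: "length (idx l) = glen (\<Delta> l)" if "l < k" for l using idx_eq[OF that] by simp
  have plI: "pl l j \<in> Iset (\<Psi> l) (SG l)" if "l < k" "j \<in> {1..glen (\<Delta> l)}" for l j
    using plimg[OF that(1)] that(2) by blast
  have plR: "pl l j \<in> {1..i (Suc l) - i l}" if "l < k" "j \<in> {1..glen (\<Delta> l)}" for l j
    using IsetD[OF that(1)] plI[OF that] by blast
  have plW: "\<exists>\<beta>\<in>\<Psi> l. wall \<Gamma> (i l + pl l j) = hyp \<beta>" if "l < k" "j \<in> {1..glen (\<Delta> l)}" for l j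
    using IsetD[OF that(1)] plI[OF that] by blast
  have wD: "wall (\<Delta> l) j = wall \<Gamma> (i l + pl l j)" if "l < k" "j \<in> {1..glen (\<Delta> l)}" for l j
  proof -
    have "snd (\<Delta> l) = map (wall (SG l)) (idx l)"
      using liftD[OF that(1)] unfolding lifts_def grestr_def idx_def Let_def by simp
    hence "snd (\<Delta> l) ! (j - 1) = wall (SG l) (idx l ! (j - 1))"
      using len_idx[OF that(1)] that(2) by auto
    hence "wall (\<Delta> l) j = wall (SG l) (idx l ! (j - 1))" by (simp add: wall_def[of "\<Delta> l"])
    also have "\<dots> = wall \<Gamma> (i l + pl l j)" using pl_idx[OF that] sg3[OF that(1) plR[OF that]] by simp
    finally show ?thesis .
  qed
  have liftC: "lifts_ch \<Phi> (\<Psi> l) (chamber (\<Delta> l) j) (restr (\<Psi> l) (chamber (SG l) ((0 # idx l) ! j)))"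
    if "l < k" "j \<le> glen (\<Delta> l)" for l j
  proof -
    have L: "lifts \<Phi> (\<Psi> l) (\<Delta> l) (grestr (\<Psi> l) (SG l))" by (rule liftD[OF that(1)])
    have "j < length (fst (\<Delta> l))" using lenD[OF that(1)] that(2) by simp
    hence "lifts_ch \<Phi> (\<Psi> l) (chamber (\<Delta> l) j) (chamber (grestr (\<Psi> l) (SG l)) j)"
      using L unfolding lifts_def by blast
    moreover have "chamber (grestr (\<Psi> l) (SG l)) j = restr (\<Psi> l) (chamber (SG l) ((0 # idx l) ! j))"
    proof -
      have F: "fst (grestr (\<Psi> l) (SG l)) = map (\<lambda>j. restr (\<Psi> l) (chamber (SG l) j)) (0 # idx l)"
        unfolding grestr_def idx_def Let_def by simp
      have jl: "j < length (0 # idx l)" using len_idx[OF that(1)] that(2) by simp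
      have "chamber (grestr (\<Psi> l) (SG l)) j = map (\<lambda>j. restr (\<Psi> l) (chamber (SG l) j)) (0 # idx l) ! j"
        unfolding chamber_def[of "grestr (\<Psi> l) (SG l)"] F ..
      also have "\<dots> = restr (\<Psi> l) (chamber (SG l) ((0 # idx l) ! j))" by (rule nth_map[OF jl])
      finally show ?thesis .
    qed
    ultimately show ?thesis by simp
  qed
  have block: "\<exists>l j'. l < k \<and> j' \<in> {1..glen (\<Delta> l)} \<and> j = s l + j' \<and> p j = pl l j' + i l"
    if jin: "j \<in> {1..glen GG}" for j
  proof -
    obtain l where l: "l < k" "s l < j" "j \<le> s (Suc l)"
      using block_ex[where j=j and K=k and f="\<lambda>m. glen (\<Delta> m)"] jin glenG unfolding s_def by auto
    have "s (Suc l) = s l + glen (\<Delta> l)" by (simp add: s_def)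
    moreover have "p j = pl l (j - s l) + i l"
      using assms(11) l unfolding s_def by (simp add: lessThan_Suc_atMost[symmetric])
    ultimately show ?thesis using l by (intro exI[of _ l] exI[of _ "j - s l"]) auto
  qed
  have sSuc: "s (Suc l) = s l + glen (\<Delta> l)" for l by (simp add: s_def)
  have pbounds: "1 \<le> p j \<and> i l < p j \<and> p j \<le> i (Suc l) \<and> p j \<le> glen \<Gamma>"
    if "l < k" "j' \<in> {1..glen (\<Delta> l)}" "p j = pl l j' + i l" for l j j'
  proof -
    have "pl l j' \<in> {1..i (Suc l) - i l}" using plR[OF that(1,2)] .
    moreover have "i (Suc l) \<le> glen \<Gamma>" using ik[of "Suc l"] that(1) by simp
    moreover have "i l \<le> i (Suc l)" using il[OF that(1)] .
    ultimately show ?thesis using that(3) by auto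
  qed
  have ppair: "ppair GG \<Gamma> p"
    unfolding ppair_def
  proof (intro conjI)
    show "strict_mono_on {1..glen GG} p"
    proof (rule strict_mono_onI)
      fix x y assume x: "x \<in> {1..glen GG}" and y: "y \<in> {1..glen GG}" and xy: "x < y"
      obtain l x' where bx: "l < k" "x' \<in> {1..glen (\<Delta> l)}" "x = s l + x'" "p x = pl l x' + i l"
        using block[OF x] by blast
      obtain l' y' where bY: "l' < k" "y' \<in> {1..glen (\<Delta> l')}" "y = s l' + y'" "p y = pl l' y' + i l'"
        using block[OF y] by blast
      have px: "i l < p x" "p x \<le> i (Suc l)" using pbounds[OF bx(1,2,4)] by auto
      have py: "i l' < p y" "p y \<le> i (Suc l')" using pbounds[OF bY(1,2,4)] by auto
      consider "l = l'" | "l < l'" | "l' < l" by arith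
      thus "p x < p y"
      proof cases
        case 1
        hence "x' < y'" using bx(3) bY(3) xy by simp
        hence "pl l x' < pl l y'" using strict_mono_onD[OF plmono[OF bx(1)] bx(2)] bY(2) 1 by simp
        thus ?thesis using bx(4) bY(4) 1 by simp
      next
        case 2
        hence "i (Suc l) \<le> i l'" using imono[of "Suc l" l'] bY(1) by simp
        thus ?thesis using px py by simp
      next
        case 3
        have "s (Suc l') \<le> s l" unfolding s_def using 3 by (intro sum_mono_idx) simp
        moreover have "y \<le> s (Suc l')" using bY(2,3) sSuc[of l'] by simp
        ultimately show ?thesis using bx(2,3) xy by simp
      qed
    qed
    show "p ` {1..glen GG} \<subseteq> {1..glen \<Gamma>}"
    proof
      fix z assume "z \<in> p ` {1..glen GG}"
      then obtain x where x: "x \<in> {1..glen GG}" "z = p x" by blast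
      obtain l x' where bx: "l < k" "x' \<in> {1..glen (\<Delta> l)}" "x = s l + x'" "p x = pl l x' + i l"
        using block[OF x(1)] by blast
      show "z \<in> {1..glen \<Gamma>}" using pbounds[OF bx(1,2,4)] x(2) by simp
    qed
    show "\<forall>j\<in>{1..glen GG}. wall \<Gamma> (p j) = wall GG j"
    proof
      fix x assume x: "x \<in> {1..glen GG}"
      obtain l x' where bx: "l < k" "x' \<in> {1..glen (\<Delta> l)}" "x = s l + x'" "p x = pl l x' + i l"
        using block[OF x(1)] by blast
      show "wall \<Gamma> (p x) = wall GG x" using wG[OF bx(1,2)] wD[OF bx(1,2)] bx(3,4) by (simp add: add.commute)
    qed
  qed
  have sign: "positive_sign GG \<Gamma> p"
    unfolding positive_sign_def
  proof
    fix j assume jin: "j \<in> {1..glen GG}"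
    obtain l j' where b: "l < k" "j' \<in> {1..glen (\<Delta> l)}" "j = s l + j'" "p j = pl l j' + i l"
      using block[OF jin] by blast
    obtain \<beta> where \<beta>: "\<beta> \<in> \<Psi> l" "wall \<Gamma> (i l + pl l j') = hyp \<beta>" using plW[OF b(1,2)] by blast
    have w: "wall GG j = hyp \<beta>" using wG[OF b(1,2)] wD[OF b(1,2)] \<beta>(2) b(3) by simp
    have c1: "chamber GG j = chamber (\<Delta> l) j'" using chG[OF b(1)] b(2,3) by simp
    have Dch: "chamber (\<Delta> l) j' \<in> Ch \<Phi>" using galD[OF b(1)] b(2) unfolding is_gallery_def by auto
    have pj: "p j \<le> glen \<Gamma>" using pbounds[OF b(1,2,4)] by simp
    have Cch: "chamber \<Gamma> (p j) \<in> Ch \<Phi>" using assms(2) pj unfolding is_gallery_def by auto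
    have lc: "lifts_ch \<Phi> (\<Psi> l) (chamber (\<Delta> l) j') (restr (\<Psi> l) (chamber \<Gamma> (p j)))"
    proof -
      have "(0 # idx l) ! j' = idx l ! (j' - 1)" using b(2) by (cases j') auto
      hence e1: "(0 # idx l) ! j' = pl l j'" using pl_idx[OF b(1,2)] by simp
      have e2: "chamber (SG l) (pl l j') = chamber \<Gamma> (i l + pl l j')"
        using sg2[OF b(1)] plR[OF b(1,2)] by simp
      show ?thesis using liftC[OF b(1), of j'] b(2,4) e1 e2 by (simp add: add.commute)
    qed
    show "\<not> separates (wall GG j) (chamber GG j) (chamber \<Gamma> (p j))"
      using core[OF assms(1) subD[OF b(1)] Dch Cch lc \<beta>(1)] w c1 by simp
  qed
  have cosign: "positive_cosign GG \<Gamma> p"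
    unfolding positive_cosign_def
  proof
    fix j assume jin: "j \<in> {1..glen GG}"
    obtain l j' where b: "l < k" "j' \<in> {1..glen (\<Delta> l)}" "j = s l + j'" "p j = pl l j' + i l"
      using block[OF jin] by blast
    obtain \<beta> where \<beta>: "\<beta> \<in> \<Psi> l" "wall \<Gamma> (i l + pl l j') = hyp \<beta>" using plW[OF b(1,2)] by blast
    have w: "wall GG j = hyp \<beta>" using wG[OF b(1,2)] wD[OF b(1,2)] \<beta>(2) b(3) by simp
    define q where "q = (0 # idx l) ! (j' - 1)"
    have qv: "q = (if j' = 1 then 0 else pl l (j' - 1))"
    proof (cases "j' = 1")
      case True thus ?thesis by (simp add: q_def)
    next
      case False
      hence j2: "j' - 1 \<in> {1..glen (\<Delta> l)}" using b(2) by auto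
      have "q = idx l ! (j' - 1 - 1)" using False b(2) unfolding q_def by (cases "j' - 1") auto
      thus ?thesis using pl_idx[OF b(1) j2] False by simp
    qed
    have plpos: "pl l j' \<ge> 1" using plR[OF b(1,2)] by simp
    have mono_le: "pl l t \<le> pl l t'" if "t \<in> {1..glen (\<Delta> l)}" "t' \<in> {1..glen (\<Delta> l)}" "t \<le> t'" for t t'
      using strict_mono_onD[OF plmono[OF b(1)] that(1,2)] that(3) by (cases "t = t'") auto
    have qlt: "q < pl l j'"
    proof (cases "j' = 1")
      case True thus ?thesis using qv plpos by simp
    next
      case False
      hence "j' - 1 \<in> {1..glen (\<Delta> l)}" "j' - 1 < j'" using b(2) by auto
      thus ?thesis using qv False strict_mono_onD[OF plmono[OF b(1)] _ b(2)] by simp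
    qed
    have noI: "m \<notin> Iset (\<Psi> l) (SG l)" if m: "q < m" "m < pl l j'" for m
    proof
      assume "m \<in> Iset (\<Psi> l) (SG l)"
      then obtain t where t: "t \<in> {1..glen (\<Delta> l)}" "m = pl l t" using plimg[OF b(1)] by blast
      show False
      proof (cases "t < j'")
        case True
        hence j1: "j' \<noteq> 1" "j' - 1 \<in> {1..glen (\<Delta> l)}" "t \<le> j' - 1" using t(1) b(2) by auto
        hence "pl l t \<le> q" using mono_le[OF t(1) j1(2) j1(3)] qv by simp
        thus False using m t(2) by simp
      next
        case False
        hence "pl l j' \<le> pl l t" using mono_le[OF b(2) t(1)] by simp
        thus False using m t(2) by simp
      qed
    qed
    have c1: "chamber GG (j - 1) = chamber (\<Delta> l) (j' - 1)"
    proof -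
      have "j - 1 = s l + (j' - 1)" using b(2,3) by auto
      moreover have "j' - 1 \<le> glen (\<Delta> l)" using b(2) by auto
      ultimately show ?thesis using chG[OF b(1), of "j' - 1"] by simp
    qed
    have Dch: "chamber (\<Delta> l) (j' - 1) \<in> Ch \<Phi>" using galD[OF b(1)] b(2) unfolding is_gallery_def by auto
    have pj: "p j \<le> glen \<Gamma>" using pbounds[OF b(1,2,4)] by simp
    have Cch: "chamber \<Gamma> (p j - 1) \<in> Ch \<Phi>" using assms(2) pj unfolding is_gallery_def by auto
    have lc0: "lifts_ch \<Phi> (\<Psi> l) (chamber (\<Delta> l) (j' - 1)) (restr (\<Psi> l) (chamber (SG l) q))"
      using liftC[OF b(1), of "j' - 1"] b(2) unfolding q_def by auto
    have qR: "q \<le> i (Suc l) - i l" using qlt plR[OF b(1,2)] by simp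
    have e2: "chamber (SG l) q = chamber \<Gamma> (i l + q)" using sg2[OF b(1) qR] .
    have ch: "restr (\<Psi> l) (chamber \<Gamma> (i l + q)) = restr (\<Psi> l) (chamber \<Gamma> (i l + (pl l j' - 1)))"
    proof (rule chain[OF assms(1) PsPh[OF b(1)] assms(2)])
      show "i l + q \<le> i l + (pl l j' - 1)" using qlt by simp
      show "i l + (pl l j' - 1) \<le> glen \<Gamma>" using pj b(4) plpos by simp
      show "\<forall>m. i l + q < m \<and> m \<le> i l + (pl l j' - 1) \<longrightarrow> \<not> (\<exists>\<beta>\<in>\<Psi> l. wall \<Gamma> m = hyp \<beta>)"
      proof (intro allI impI)
        fix m assume m: "i l + q < m \<and> m \<le> i l + (pl l j' - 1)"
        define m' where "m' = m - i l"
        have m': "q < m'" "m' < pl l j'" "m = i l + m'" using m plpos unfolding m'_def by auto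
        have "m' \<in> {1..i (Suc l) - i l}" using m' plR[OF b(1,2)] by auto
        thus "\<not> (\<exists>\<beta>\<in>\<Psi> l. wall \<Gamma> m = hyp \<beta>)" using noI[OF m'(1,2)] IsetD[OF b(1), of m'] m'(3) by auto
      qed
    qed
    have lc: "lifts_ch \<Phi> (\<Psi> l) (chamber (\<Delta> l) (j' - 1)) (restr (\<Psi> l) (chamber \<Gamma> (p j - 1)))"
    proof -
      have "p j - 1 = i l + (pl l j' - 1)" using b(4) plpos by simp
      thus ?thesis using lc0 e2 ch by simp
    qed
    show "\<not> separates (wall GG (j)) (chamber GG (j - 1)) (chamber \<Gamma> (p j - 1))"
      using core[OF assms(1) subD[OF b(1)] Dch Cch lc \<beta>(1)] w c1 by simp
  qed
  show ?thesis using ppair sign cosign unfolding GG_def Ds_def by blast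
qed


end
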